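(* Consider the following continuous-time Markov decision process (the bandit process of a self-shared ride-sharing service). Fix parameters $\lambda>0$ (arrival rate), $\mu>0$ (reneging rate), $R>0$ (reward for serving a pair), $\bar R>0$ (reward for a non-shared service) and $C\ge 0$ (reneging penalty), and write $X:=\bar R-C$. The state space is $\{0,1\}$ (number of waiting customers) and in each state an action $a\in\{0,1\}$ is chosen. Under action $a$: in state $0$ the process jumps to state $1$ at rate $a\lambda$ and earns reward rate $0$; in state $1$ the process jumps to state $0$ at total rate $a\lambda+\mu$ and earns reward rate $Ra\lambda+X\mu$ (a pair is served at rate $a\lambda$, earning $R$ per pair; the waiting customer reneges at rate $\mu$, earning $X$). For $\eta\in\mathbb{R}$, the $\eta$-process is the same process in which the reward rate in state $n$ under action $a$ is additionally reduced by $\eta a$. The Whittle index $\eta(n)$ of state $n\in\{0,1\}$ is a value of $\eta$ at which there exist two stationary deterministic policies maximizing the long-run average reward of the $\eta$-process, one taking action $1$ and the other taking action $0$ in state $n$; and the process is Whittle indexable if, for each state $n$, action $1$ in state $n$ is optimal for all $\eta<\eta(n)$ and action $0$ is optimal for all $\eta>\eta(n)$. Then the process is Whittle indexable and its Whittle indices are as follows. If $R<2X$, then $$\eta(0)=\lambda X,\qquad \eta(1)=\frac{\lambda}{2\lambda+\mu}\bigl((\lambda+\mu)R-\mu X\bigr);$$ otherwise (if $R\ge 2X$), $$\eta(0)=\eta(1)=\frac{\lambda}{2\lambda+\mu}\bigl(\lambda R+\mu X\bigr).$$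
   Context: This models a ride-sharing service in which two customers of the same type can share one vehicle: an arriving customer assigned to the service (action $1$) either waits (if nobody is waiting) or departs together with the single waiting customer (if one is waiting); a waiting customer becomes impatient after an exponential time of rate $\mu$ and leaves for a non-shared service, which yields reward $\bar R$ minus penalty $C$. Long-run average reward means $\lim_{T\to\infty}\frac1T\mathbb{E}\int_0^T(\text{reward rate})\,dt$. *)

theory Defs
  imports "HOL-Analysis.Analysis"
begin

text \<open>States are 0 and 1 (number of waiting customers); actions are 0 and 1.
  A stationary deterministic policy is a map d with d 0, d 1 in {0,1}.\<close>

definition valid_policy :: "(nat \<Rightarrow> nat) \<Rightarrow> bool" where
  "valid_policy d \<longleftrightarrow> d 0 \<in> {0,1} \<and> d 1 \<in> {0,1}"

definition jump_rate :: "real \<Rightarrow> real \<Rightarrow> nat \<Rightarrow> nat \<Rightarrow> nat \<Rightarrow> real" where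
  "jump_rate lam mu a n m =
     (if n = 0 \<and> m = 1 then real a * lam
      else if n = 1 \<and> m = 0 then real a * lam + mu
      else 0)"

definition generator :: "real \<Rightarrow> real \<Rightarrow> (nat \<Rightarrow> nat) \<Rightarrow> nat \<Rightarrow> nat \<Rightarrow> real" where
  "generator lam mu d n m =
     (if n = m then - (\<Sum>k\<in>{0,1} - {n}. jump_rate lam mu (d n) n k)
      else jump_rate lam mu (d n) n m)"

fun matpow :: "(nat \<Rightarrow> nat \<Rightarrow> real) \<Rightarrow> nat \<Rightarrow> nat \<Rightarrow> nat \<Rightarrow> real" where
  "matpow Q 0 i j = (if i = j then 1 else 0)"
| "matpow Q (Suc k) i j = (\<Sum>l\<in>{0,1}. matpow Q k i l * Q l j)"

definition trans_prob :: "real \<Rightarrow> real \<Rightarrow> (nat \<Rightarrow> nat) \<Rightarrow> real \<Rightarrow> nat \<Rightarrow> nat \<Rightarrow> real" where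
  "trans_prob lam mu d t i j = (\<Sum>k. t ^ k / fact k * matpow (generator lam mu d) k i j)"

definition reward_rate :: "real \<Rightarrow> real \<Rightarrow> real \<Rightarrow> real \<Rightarrow> real \<Rightarrow> nat \<Rightarrow> nat \<Rightarrow> real" where
  "reward_rate lam mu R X eta a n =
     (if n = 1 then R * real a * lam + X * mu else 0) - eta * real a"

definition avg_reward :: "real \<Rightarrow> real \<Rightarrow> real \<Rightarrow> real \<Rightarrow> real \<Rightarrow> (nat \<Rightarrow> nat) \<Rightarrow> nat \<Rightarrow> real" where
  "avg_reward lam mu R X eta d i =
     Lim at_top (\<lambda>T. (1 / T) * integral {0..T}
        (\<lambda>t. \<Sum>j\<in>{0,1}. trans_prob lam mu d t i j * reward_rate lam mu R X eta (d j) j))"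

definition optimal_policy :: "real \<Rightarrow> real \<Rightarrow> real \<Rightarrow> real \<Rightarrow> real \<Rightarrow> (nat \<Rightarrow> nat) \<Rightarrow> bool" where
  "optimal_policy lam mu R X eta d \<longleftrightarrow> valid_policy d \<and>
     (\<forall>d'. valid_policy d' \<longrightarrow>
        (\<forall>i\<in>{0,1}. avg_reward lam mu R X eta d' i \<le> avg_reward lam mu R X eta d i))"

definition action_optimal :: "real \<Rightarrow> real \<Rightarrow> real \<Rightarrow> real \<Rightarrow> real \<Rightarrow> nat \<Rightarrow> nat \<Rightarrow> bool" where
  "action_optimal lam mu R X eta n a \<longleftrightarrow>
     (\<exists>d. optimal_policy lam mu R X eta d \<and> d n = a)"

definition is_whittle_index :: "real \<Rightarrow> real \<Rightarrow> real \<Rightarrow> real \<Rightarrow> nat \<Rightarrow> real \<Rightarrow> bool" where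
  "is_whittle_index lam mu R X n eta \<longleftrightarrow>
     action_optimal lam mu R X eta n 1 \<and> action_optimal lam mu R X eta n 0"

definition whittle_indexable_with :: "real \<Rightarrow> real \<Rightarrow> real \<Rightarrow> real \<Rightarrow> (nat \<Rightarrow> real) \<Rightarrow> bool" where
  "whittle_indexable_with lam mu R X idx \<longleftrightarrow>
     (\<forall>n\<in>{0,1}. is_whittle_index lam mu R X n (idx n) \<and>
        (\<forall>eta. eta < idx n \<longrightarrow> action_optimal lam mu R X eta n 1) \<and>
        (\<forall>eta. eta > idx n \<longrightarrow> action_optimal lam mu R X eta n 0))"

definition whittle_indexable :: "real \<Rightarrow> real \<Rightarrow> real \<Rightarrow> real \<Rightarrow> bool" where
  "whittle_indexable lam mu R X \<longleftrightarrow> (\<exists>idx. whittle_indexable_with lam mu R X idx)"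

end

theory Submission
  imports Defs "HOL-Real_Asymp.Real_Asymp"
begin

lemma matpow_gen:
  assumes q: "Q 0 0 = -a" "Q 0 1 = a" "Q 1 0 = b" "Q 1 1 = -b" and i: "i \<in> {0,1::nat}"
  shows "j \<in> {0,1} \<Longrightarrow> matpow Q (Suc k) i j = (-(a+b))^k * Q i j"
proof (induction k arbitrary: j)
  case 0
  then show ?case using i by auto
next
  case (Suc k)
  have "matpow Q (Suc (Suc k)) i j = (\<Sum>l\<in>{0,1}. matpow Q (Suc k) i l * Q l j)" by simp
  also have "\<dots> = (\<Sum>l\<in>{0,1::nat}. (-(a+b))^k * Q i l * Q l j)"
  proof (rule sum.cong[OF refl])
    fix l :: nat assume l: "l \<in> {0,1}"
    show "matpow Q (Suc k) i l * Q l j = (-(a+b))^k * Q i l * Q l j"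
      by (subst Suc.IH[OF l]) (rule refl)
  qed
  also have "\<dots> = (-(a+b))^Suc k * Q i j"
    using i Suc.prems q by (auto simp: algebra_simps)
  finally show ?case .
qed

lemma gen_vals:
  "generator lam mu d 0 0 = - (real (d 0) * lam)"
  "generator lam mu d 0 1 = real (d 0) * lam"
  "generator lam mu d 1 0 = real (d 1) * lam + mu"
  "generator lam mu d 1 1 = - (real (d 1) * lam + mu)"
  by (simp_all add: generator_def jump_rate_def)

lemma trans_prob_closed:
  fixes lam mu :: real and d :: "nat \<Rightarrow> nat"
  assumes "mu > 0" "lam > 0" "i \<in> {0,1}" "j \<in> {0,1}"
  defines "s \<equiv> real (d 0) * lam + (real (d 1) * lam + mu)"
  shows "trans_prob lam mu d t i j =
     (if i = j then 1 else 0) + generator lam mu d i j * (1 - exp (-(s*t))) / s"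
proof -
  let ?Q = "generator lam mu d"
  have s: "s > 0" using assms by (simp add: s_def add_nonneg_pos)
  have mp: "matpow ?Q (Suc k) i j = (-s)^k * ?Q i j" for k
    unfolding s_def by (rule matpow_gen[OF gen_vals assms(3,4)])
  have e: "(\<lambda>k. (-(s*t))^k / fact k) sums exp (-(s*t))"
    using exp_converges[of "-(s*t)"] by (simp add: divide_inverse mult.commute)
  have e2: "(\<lambda>k. (- ?Q i j / s) * ((-(s*t))^k / fact k) + (if k = 0 then (if i = j then 1 else 0) + ?Q i j / s else 0))
     sums ((- ?Q i j / s) * exp (-(s*t)) + ((if i = j then 1 else 0) + ?Q i j / s))"
    by (intro sums_add sums_mult e) (rule sums_single)
  have eq: "(\<lambda>k. t ^ k / fact k * matpow ?Q k i j) =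
     (\<lambda>k. (- ?Q i j / s) * ((-(s*t))^k / fact k) + (if k = 0 then (if i = j then 1 else 0) + ?Q i j / s else 0))"
  proof
    fix k show "t ^ k / fact k * matpow ?Q k i j =
      (- ?Q i j / s) * ((-(s*t))^k / fact k) + (if k = 0 then (if i = j then 1 else 0) + ?Q i j / s else 0)"
    proof (cases k)
      case 0 then show ?thesis by simp
    next
      case (Suc m)
      have "(-(s*t))^k = ((-s)*t)^k" by simp
      also have "\<dots> = (-s) * ((-s)^m * t^k)" using Suc by (simp only: power_mult_distrib power_Suc mult_ac)
      finally have pk: "(-(s*t))^k = (-s) * ((-s)^m * t^k)" .
      have m1: "matpow ?Q k i j = (-s)^m * ?Q i j" using mp[of m] Suc by simp
      have m2: "(-(s*t))^m = (-s)^m * t^m"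
        by (metis mult_minus_left power_mult_distrib)
      show ?thesis unfolding m1 pk using Suc s
        by (simp add: field_simps del: fact_Suc)

    qed
  qed
  have "trans_prob lam mu d t i j = (- ?Q i j / s) * exp (-(s*t)) + ((if i = j then 1 else 0) + ?Q i j / s)"
    unfolding trans_prob_def eq by (rule sums_unique[OF e2, symmetric])
  then show ?thesis using s by (simp add: diff_divide_distrib right_diff_distrib)
qed

lemma integral_exp_form:
  fixes A c s T :: real
  assumes "s > 0" "T \<ge> 0"
  shows "integral {0..T} (\<lambda>t. A - c * exp (-(s*t))) = A * T + c * (exp (-(s*T)) - 1) / s"
proof -
  let ?F = "\<lambda>t. A * t + c * exp (-(s*t)) / s"
  have "((\<lambda>t. A - c * exp (-(s*t))) has_integral (?F T - ?F 0)) {0..T}"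
  proof (rule fundamental_theorem_of_calculus[OF assms(2)])
    fix x :: real assume "x \<in> {0..T}"
    have "(?F has_real_derivative (A - c * exp (-(s*x)))) (at x within {0..T})"
      using assms(1) by (auto intro!: derivative_eq_intros simp: field_simps)
    then show "(?F has_vector_derivative (A - c * exp (-(s*x)))) (at x within {0..T})"
      by (simp add: has_real_derivative_iff_has_vector_derivative)
  qed
  then have "integral {0..T} (\<lambda>t. A - c * exp (-(s*t))) = ?F T - ?F 0" by (rule integral_unique)
  moreover have "?F T - ?F 0 = A * T + c * (exp (-(s*T)) - 1) / s"
    by (simp add: diff_divide_distrib right_diff_distrib)
  ultimately show ?thesis by simp
qed

lemma avg_limit:
  fixes A c s :: real
  assumes "s > 0"
  shows "((\<lambda>T. (1 / T) * (A * T + c * (exp (-(s*T)) - 1) / s)) \<longlongrightarrow> A) at_top"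
proof -
  have e: "((\<lambda>T. exp (-(s*T))) \<longlongrightarrow> 0) at_top" using assms by real_asymp
  have "((\<lambda>T. A + (1/T) * (c * (exp (-(s*T)) - 1) / s)) \<longlongrightarrow> A + 0 * (c * (0 - 1) / s)) at_top"
    by (intro tendsto_intros e tendsto_divide_0[OF tendsto_const] filterlim_at_top_imp_at_infinity[OF filterlim_ident]) (use assms in auto)
  moreover have "eventually (\<lambda>T. A + (1/T) * (c * (exp (-(s*T)) - 1) / s) =
      (1 / T) * (A * T + c * (exp (-(s*T)) - 1) / s)) at_top"
    using eventually_gt_at_top[of 0] by eventually_elim (simp add: distrib_left)
  ultimately show ?thesis by (simp add: tendsto_cong)
qed

lemma avg_closed:
  fixes lam mu :: real and d :: "nat \<Rightarrow> nat"
  assumes "mu > 0" "lam > 0" "i \<in> {0,1}"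
  shows "avg_reward lam mu R X eta d i =
    ((real (d 1) * lam + mu) * reward_rate lam mu R X eta (d 0) 0 +
     real (d 0) * lam * reward_rate lam mu R X eta (d 1) 1) / (real (d 0) * lam + (real (d 1) * lam + mu))"
proof -
  define a where "a = real (d 0) * lam"
  define b where "b = real (d 1) * lam + mu"
  define s where "s = a + b"
  define r0 where "r0 = reward_rate lam mu R X eta (d 0) 0"
  define r1 where "r1 = reward_rate lam mu R X eta (d 1) 1"
  have a0: "a \<ge> 0" using assms by (simp add: a_def)
  have b0: "b > 0" using assms by (simp add: b_def add_nonneg_pos)
  have s: "s > 0" using a0 b0 by (simp add: s_def)
  define A where "A = (b * r0 + a * r1) / s"
  define c where "c = (if i = 0 then a * (r1 - r0) / s else b * (r0 - r1) / s)"
  have tp: "\<And>j t. j \<in> {0,1} \<Longrightarrow> trans_prob lam mu d t i j =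
     (if i = j then 1 else 0) + generator lam mu d i j * (1 - exp (-(s*t))) / s"
    unfolding s_def a_def b_def by (rule trans_prob_closed[OF assms(1,2,3)])
  have f: "(\<lambda>t. \<Sum>j\<in>{0,1}. trans_prob lam mu d t i j * reward_rate lam mu R X eta (d j) j)
      = (\<lambda>t. A - c * exp (-(s*t)))"
  proof
    fix t
    have "(\<Sum>j\<in>{0,1}. trans_prob lam mu d t i j * reward_rate lam mu R X eta (d j) j)
       = trans_prob lam mu d t i 0 * r0 + trans_prob lam mu d t i 1 * r1"
      by (simp add: r0_def r1_def)
    also have "\<dots> = A - c * exp (-(s*t))"
    proof -
      define e where "e = exp (-(s*t))"
      have g: "generator lam mu d 0 0 = -a" "generator lam mu d 0 1 = a"
        "generator lam mu d 1 0 = b" "generator lam mu d 1 1 = -b"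
        using gen_vals[of lam mu d] by (simp_all add: a_def b_def)
      have sn: "s \<noteq> 0" using s by simp
      show ?thesis
      proof (cases "i = 0")
        case True
        have "trans_prob lam mu d t i 0 = 1 - a * (1 - e) / s"
          "trans_prob lam mu d t i 1 = a * (1 - e) / s"
          using tp[of 0 t] tp[of 1 t] True g by (simp_all add: e_def)
        note tv = this
        show ?thesis using True sn unfolding A_def c_def e_def[symmetric] tv
          by (simp add: field_simps s_def)
      next
        case False
        then have i1: "i = 1" using assms(3) by simp
        have "trans_prob lam mu d t i 0 = b * (1 - e) / s"
          "trans_prob lam mu d t i 1 = 1 - b * (1 - e) / s"
          using tp[of 0 t] tp[of 1 t] i1 g by (simp_all add: e_def)
        note tv = this
        show ?thesis using i1 sn unfolding A_def c_def e_def[symmetric] tv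
          by (simp add: field_simps s_def)
      qed
    qed
    finally show "(\<Sum>j\<in>{0,1}. trans_prob lam mu d t i j * reward_rate lam mu R X eta (d j) j) = A - c * exp (-(s*t))" .
  qed
  have "((\<lambda>T. (1 / T) * integral {0..T} (\<lambda>t. A - c * exp (-(s*t)))) \<longlongrightarrow> A) at_top"
  proof -
    have "eventually (\<lambda>T. (1 / T) * (A * T + c * (exp (-(s*T)) - 1) / s) =
        (1 / T) * integral {0..T} (\<lambda>t. A - c * exp (-(s*t)))) at_top"
      using eventually_ge_at_top[of 0] by eventually_elim (simp add: integral_exp_form[OF s])
    then show ?thesis using avg_limit[OF s] by (rule tendsto_cong[THEN iffD1])
  qed
  then have "avg_reward lam mu R X eta d i = A"
    unfolding avg_reward_def f by (intro tendsto_Lim) simp_all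
  then show ?thesis by (simp add: A_def s_def a_def b_def r0_def r1_def)
qed

definition G :: "real \<Rightarrow> real \<Rightarrow> real \<Rightarrow> real \<Rightarrow> real \<Rightarrow> nat \<Rightarrow> nat \<Rightarrow> real" where
  "G lam mu R X eta x y =
    ((real y * lam + mu) * reward_rate lam mu R X eta x 0 +
     real x * lam * reward_rate lam mu R X eta y 1) / (real x * lam + (real y * lam + mu))"

lemma action_char:
  fixes lam mu :: real
  assumes "mu > 0" "lam > 0" "n \<in> {0,1}"
  shows "action_optimal lam mu R X eta n a \<longleftrightarrow>
    (\<exists>x\<in>{0,1}. \<exists>y\<in>{0,1}. (if n = 0 then x else y) = a \<and>
      (\<forall>x'\<in>{0,1}. \<forall>y'\<in>{0,1}. G lam mu R X eta x' y' \<le> G lam mu R X eta x y))"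
proof
  assume "action_optimal lam mu R X eta n a"
  then obtain d where d: "optimal_policy lam mu R X eta d" "d n = a"
    unfolding action_optimal_def by blast
  have v: "valid_policy d" and le: "\<And>d' i. valid_policy d' \<Longrightarrow> i \<in> {0,1} \<Longrightarrow>
      avg_reward lam mu R X eta d' i \<le> avg_reward lam mu R X eta d i"
    using d(1) unfolding optimal_policy_def by auto
  show "\<exists>x\<in>{0,1}. \<exists>y\<in>{0,1}. (if n = 0 then x else y) = a \<and>
      (\<forall>x'\<in>{0,1}. \<forall>y'\<in>{0,1}. G lam mu R X eta x' y' \<le> G lam mu R X eta x y)"
  proof (intro bexI conjI ballI)
    show "(if n = 0 then d 0 else d 1) = a" using d(2) assms(3) by auto
    show "d 0 \<in> {0,1}" "d 1 \<in> {0,1}" using v unfolding valid_policy_def by auto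
    fix x' y' :: nat assume xy: "x' \<in> {0,1}" "y' \<in> {0,1}"
    let ?d = "\<lambda>k::nat. if k = 0 then x' else y'"
    have "valid_policy ?d" using xy by (simp add: valid_policy_def)
    from le[OF this, of 0] show "G lam mu R X eta x' y' \<le> G lam mu R X eta (d 0) (d 1)"
      by (simp add: avg_closed[OF assms(1,2)] G_def)
  qed
next
  assume "\<exists>x\<in>{0,1}. \<exists>y\<in>{0,1}. (if n = 0 then x else y) = a \<and>
      (\<forall>x'\<in>{0,1}. \<forall>y'\<in>{0,1}. G lam mu R X eta x' y' \<le> G lam mu R X eta x y)"
  then obtain x y where xy: "x \<in> {0,1}" "y \<in> {0,1}" "(if n = 0 then x else y) = a"
    and M: "\<And>x' y'. x'\<in>{0,1} \<Longrightarrow> y'\<in>{0,1} \<Longrightarrow> G lam mu R X eta x' y' \<le> G lam mu R X eta x y"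
    by blast
  let ?d = "\<lambda>k::nat. if k = 0 then x else y"
  have "optimal_policy lam mu R X eta ?d"
    unfolding optimal_policy_def
  proof (intro conjI allI impI ballI)
    show "valid_policy ?d" using xy by (simp add: valid_policy_def)
    fix d' i assume v: "valid_policy d'" and i: "i \<in> {0,1::nat}"
    have "d' 0 \<in> {0,1}" "d' 1 \<in> {0,1}" using v unfolding valid_policy_def by auto
    from M[OF this] show "avg_reward lam mu R X eta d' i \<le> avg_reward lam mu R X eta ?d i"
      by (simp add: avg_closed[OF assms(1,2) i] G_def)
  qed
  moreover have "?d n = a" using xy(3) assms(3) by auto
  ultimately show "action_optimal lam mu R X eta n a" unfolding action_optimal_def by blast
qed

lemma G_vals:
  fixes lam mu :: real
  assumes "mu > 0" "lam > 0"
  shows "G lam mu R X eta 0 y = 0"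
    "G lam mu R X eta 1 0 = mu / (lam + mu) * (lam * X - eta)"
    "G lam mu R X eta 1 1 = lam * (lam * R + mu * X) / (2 * lam + mu) - eta"
  using assms by (auto simp: G_def reward_rate_def field_simps)

lemma AO:
  fixes lam mu R X eta :: real
  assumes "mu > 0" "lam > 0"
  defines "p \<equiv> G lam mu R X eta 1 0" and "q \<equiv> G lam mu R X eta 1 1"
  shows "action_optimal lam mu R X eta 0 1 \<longleftrightarrow> (0 \<le> p \<and> q \<le> p) \<or> (0 \<le> q \<and> p \<le> q)"
    "action_optimal lam mu R X eta 0 0 \<longleftrightarrow> p \<le> 0 \<and> q \<le> 0"
    "action_optimal lam mu R X eta 1 1 \<longleftrightarrow> (p \<le> 0 \<and> q \<le> 0) \<or> (0 \<le> q \<and> p \<le> q)"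
    "action_optimal lam mu R X eta 1 0 \<longleftrightarrow> (p \<le> 0 \<and> q \<le> 0) \<or> (0 \<le> p \<and> q \<le> p)"
  using assms(1,2) unfolding p_def q_def
  by (simp_all add: action_char G_vals(1)[OF assms(1,2)]; auto)+

lemma sgn_helper: "(al::real) > 0 \<Longrightarrow> (0 \<le> al*x \<longleftrightarrow> 0 \<le> x) \<and> (al*x \<le> 0 \<longleftrightarrow> x \<le> 0)"
  by (auto simp: zero_le_mult_iff mult_le_0_iff)

theorem proposition1:
  fixes lam mu R Rbar C :: real
  assumes "lam > 0" and "mu > 0" and "R > 0" and "Rbar > 0" and "C \<ge> 0"
  defines "X \<equiv> Rbar - C"
  shows "whittle_indexable lam mu R X \<and>
    (R < 2 * X \<longrightarrow> whittle_indexable_with lam mu R X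
        (\<lambda>n. if n = 0 then lam * X
             else lam / (2 * lam + mu) * ((lam + mu) * R - mu * X))) \<and>
    (R \<ge> 2 * X \<longrightarrow> whittle_indexable_with lam mu R X
        (\<lambda>n. lam / (2 * lam + mu) * (lam * R + mu * X)))"
proof -
  define K where "K = lam / (2 * lam + mu) * (lam * R + mu * X)"
  define E where "E = lam / (2 * lam + mu) * ((lam + mu) * R - mu * X)"
  define L where "L = lam * X"
  have pos: "lam + mu > 0" "2 * lam + mu > 0" using assms by auto
  have p: "G lam mu R X eta 1 0 = mu / (lam + mu) * (L - eta)" for eta
    using G_vals(2)[OF assms(2,1)] by (simp add: L_def)
  have q: "G lam mu R X eta 1 1 = K - eta" for eta
    using G_vals(3)[OF assms(2,1)] by (simp add: K_def)
  have qp: "G lam mu R X eta 1 1 - G lam mu R X eta 1 0 = lam / (lam + mu) * (E - eta)" for eta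
    unfolding p q K_def E_def L_def using pos by (simp add: field_simps)
  have al: "mu / (lam + mu) > 0" "lam / (lam + mu) > 0" using assms pos by auto
  have sp: "(0 \<le> G lam mu R X eta 1 0 \<longleftrightarrow> eta \<le> L) \<and> (G lam mu R X eta 1 0 \<le> 0 \<longleftrightarrow> L \<le> eta)" for eta
    unfolding p using sgn_helper[OF al(1), of "L - eta"] by simp
  have sq: "(0 \<le> G lam mu R X eta 1 1 \<longleftrightarrow> eta \<le> K) \<and> (G lam mu R X eta 1 1 \<le> 0 \<longleftrightarrow> K \<le> eta)" for eta
    unfolding q by auto
  have sqp: "(G lam mu R X eta 1 0 \<le> G lam mu R X eta 1 1 \<longleftrightarrow> eta \<le> E) \<and>
             (G lam mu R X eta 1 1 \<le> G lam mu R X eta 1 0 \<longleftrightarrow> E \<le> eta)" for eta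
  proof -
    have "0 \<le> lam / (lam + mu) * (E - eta) \<longleftrightarrow> eta \<le> E"
         "lam / (lam + mu) * (E - eta) \<le> 0 \<longleftrightarrow> E \<le> eta"
      using sgn_helper[OF al(2), of "E - eta"] by simp_all
    then show ?thesis using qp[of eta] by linarith
  qed
  have KL: "K - L = lam * lam / (2 * lam + mu) * (R - 2 * X)"
    unfolding K_def L_def using pos by (simp add: field_simps)
  have "E - K = lam / (2 * lam + mu) * (((lam + mu) * R - mu * X) - (lam * R + mu * X))"
    unfolding K_def E_def by (rule right_diff_distrib[symmetric])
  also have "((lam + mu) * R - mu * X) - (lam * R + mu * X) = mu * (R - 2 * X)" by (simp add: algebra_simps)
  also have "lam / (2 * lam + mu) * (mu * (R - 2 * X)) = lam * mu / (2 * lam + mu) * (R - 2 * X)" by (simp add: mult.assoc)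
  finally have EK: "E - K = lam * mu / (2 * lam + mu) * (R - 2 * X)" .
  have c1: "lam * lam / (2 * lam + mu) > 0" "lam * mu / (2 * lam + mu) > 0" using assms pos by auto
  note AOs = AO[OF assms(2,1)]
  have ch: "(action_optimal lam mu R X eta 0 1 \<longleftrightarrow> eta \<le> L \<or> eta \<le> K) \<and>
    (action_optimal lam mu R X eta 0 0 \<longleftrightarrow> L \<le> eta \<and> K \<le> eta) \<and>
    (action_optimal lam mu R X eta 1 1 \<longleftrightarrow> (L \<le> eta \<and> K \<le> eta) \<or> (eta \<le> K \<and> eta \<le> E)) \<and>
    (action_optimal lam mu R X eta 1 0 \<longleftrightarrow> (L \<le> eta \<and> K \<le> eta) \<or> (eta \<le> L \<and> E \<le> eta))" for eta
    unfolding AOs using sp[of eta] sq[of eta] sqp[of eta] by linarith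
  note chs = ch[simplified]
  have case1: "R < 2 * X \<Longrightarrow> whittle_indexable_with lam mu R X (\<lambda>n. if n = 0 then L else E)"
  proof -
    assume h: "R < 2 * X"
    have "K - L < 0" unfolding KL by (rule mult_pos_neg[OF c1(1)]) (use h in simp)
    moreover have "E - K < 0" unfolding EK by (rule mult_pos_neg[OF c1(2)]) (use h in simp)
    ultimately show ?thesis unfolding whittle_indexable_with_def is_whittle_index_def
      by (auto simp: chs)
  qed
  have case2: "R \<ge> 2 * X \<Longrightarrow> whittle_indexable_with lam mu R X (\<lambda>n. K)"
  proof -
    assume h: "R \<ge> 2 * X"
    have "K - L \<ge> 0" unfolding KL by (rule mult_nonneg_nonneg) (use h c1 in simp_all)
    moreover have "E - K \<ge> 0" unfolding EK by (rule mult_nonneg_nonneg) (use h c1 in simp_all)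
    ultimately show ?thesis unfolding whittle_indexable_with_def is_whittle_index_def
      by (auto simp: chs)
  qed
  have wi: "whittle_indexable lam mu R X"
    unfolding whittle_indexable_def using case1 case2 by (cases "R < 2 * X") auto
  show ?thesis using wi case1 case2 unfolding K_def E_def L_def by blast
qed

end
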